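(* Let $\Sigma,\Delta$ be alphabets and $\varphi:\Delta\to2^{\Sigma^*}$ a regular language substitution such that $\varepsilon\in\varphi(\delta)$ for all $\delta\in\Delta$. Then for each $w\in\Delta^+$ and each $v\in S(\varphi(w))$ there exists $\delta\in\Delta$ such that $v\in S(\varphi(\delta))$.
   Context: A regular language substitution is a map $\varphi:\Delta\to2^{\Sigma^*}$ with each $\varphi(\delta)$ regular, extended to words by $\varphi(\delta\cdot w)=\varphi(\delta)\cdot\varphi(w)$. For a language $L\subseteq\Sigma^*$, the set of shortest nonempty words is $S(L)=\{w\in L\setminus\{\varepsilon\}\mid \text{there is no } w'\in L\setminus\{\varepsilon\} \text{ with } |w'|<|w|\}$. *)

theory Defs
  imports Main
begin

datatype 'a rexp = Zero | One | Atom 'a | Plus "'a rexp" "'a rexp"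
  | Times "'a rexp" "'a rexp" | Star "'a rexp"

definition conc :: "'a list set \<Rightarrow> 'a list set \<Rightarrow> 'a list set" where
  "conc A B = {u @ v | u v. u \<in> A \<and> v \<in> B}"

inductive_set kleene_star :: "'a list set \<Rightarrow> 'a list set" for A where
  star_nil: "[] \<in> kleene_star A"
| star_app: "u \<in> A \<Longrightarrow> v \<in> kleene_star A \<Longrightarrow> u @ v \<in> kleene_star A"

fun lang :: "'a rexp \<Rightarrow> 'a list set" where
  "lang Zero = {}"
| "lang One = {[]}"
| "lang (Atom a) = {[a]}"
| "lang (Plus r s) = lang r \<union> lang s"
| "lang (Times r s) = conc (lang r) (lang s)"
| "lang (Star r) = kleene_star (lang r)"

definition regular :: "'a list set \<Rightarrow> bool" where
  "regular L \<longleftrightarrow> (\<exists>r. lang r = L)"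

fun subst_word :: "('d \<Rightarrow> 's list set) \<Rightarrow> 'd list \<Rightarrow> 's list set" where
  "subst_word \<phi> [] = {[]}"
| "subst_word \<phi> (d # w) = conc (\<phi> d) (subst_word \<phi> w)"

definition shortest :: "'a list set \<Rightarrow> 'a list set" where
  "shortest L = {w \<in> L - {[]}. \<not> (\<exists>w' \<in> L - {[]}. length w' < length w)}"

end

theory Submission
  imports Defs
begin

lemma sub_incl:
  assumes "\<And>d. [] \<in> \<phi> d" "d \<in> set w"
  shows "\<phi> d \<subseteq> subst_word \<phi> w"
  using assms(2)
proof (induction w)
  case Nil then show ?case by simp
next
  case (Cons a w)
  have emp: "[] \<in> subst_word \<phi> w" for w
    by (induction w) (auto simp: conc_def assms(1) intro!: exI[of _ "[]"])
  show ?case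
  proof (cases "d = a")
    case True
    then show ?thesis using emp[of w] by (force simp: conc_def)
  next
    case False
    then have "\<phi> d \<subseteq> subst_word \<phi> w" using Cons by simp
    then show ?thesis using assms(1)[of a] by (force simp: conc_def)
  qed
qed

lemma sub_piece:
  assumes "v \<in> subst_word \<phi> w" "v \<noteq> []"
  shows "\<exists>d\<in>set w. \<exists>u\<in>\<phi> d. u \<noteq> [] \<and> (u = v \<or> length u < length v)"
  using assms
proof (induction w arbitrary: v)
  case Nil then show ?case by simp
next
  case (Cons a w)
  then obtain x y where xy: "v = x @ y" "x \<in> \<phi> a" "y \<in> subst_word \<phi> w"
    by (auto simp: conc_def)
  show ?case
  proof (cases "x = []")
    case True
    then have "y \<noteq> []" using xy Cons.prems by simp
    with Cons.IH[OF xy(3)] xy True show ?thesis by auto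
  next
    case False
    then show ?thesis using xy by (cases "y = []") auto
  qed
qed

theorem lemma1:
  fixes \<phi> :: "'d::finite \<Rightarrow> 's::finite list set"
  assumes "\<And>d. regular (\<phi> d)"
    and "\<And>d. [] \<in> \<phi> d"
    and "w \<noteq> []"
    and "v \<in> shortest (subst_word \<phi> w)"
  shows "\<exists>d. v \<in> shortest (\<phi> d)"
proof -
  from assms(4) have v: "v \<in> subst_word \<phi> w" "v \<noteq> []"
    and mn: "\<And>w'. w' \<in> subst_word \<phi> w \<Longrightarrow> w' \<noteq> [] \<Longrightarrow> \<not> length w' < length v"
    by (auto simp: shortest_def)
  obtain d u where d: "d \<in> set w" "u \<in> \<phi> d" "u \<noteq> []" "u = v \<or> length u < length v"
    using sub_piece[OF v] by blast
  have incl: "\<phi> d \<subseteq> subst_word \<phi> w" using sub_incl[OF assms(2) d(1)] .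
  have uv: "u = v" using mn[of u] incl d by force
  have "u \<in> shortest (\<phi> d)"
    unfolding shortest_def using d incl uv mn by fastforce
  then show ?thesis using uv by blast
qed

end
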